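(* Let $V$ be a real vector space, let $F$ be a geometric mean closed (Archimedean) vector lattice, let $u\in F^+$, and let $T\colon V\times V\to F$ be a vector semi-inner product. Define $\|x\|^T_u:=T(x,x)\boxtimes u$ for $x\in V$. Then $\|\cdot\|^T_u\colon V\to F$ is a vector seminorm, i.e. (a) $\|x\|^T_u\in F^+$ for all $x\in V$; (b) $\|\alpha x\|^T_u=|\alpha|\,\|x\|^T_u$ for all $x\in V$ and $\alpha\in\mathbb{R}$; (c) $\|x+y\|^T_u\le \|x\|^T_u+\|y\|^T_u$ for all $x,y\in V$.
   Context: All vector spaces are over $\mathbb{R}$ and all vector lattices are Archimedean. For a vector lattice $F$, $F^+=\{x\in F: x\ge 0\}$. A vector lattice $F$ is geometric mean closed if $\inf\{\theta u+\theta^{-1}v:\theta\in(0,\infty)\}$ exists in $F$ for all $u,v\in F^+$; in that case $u\boxtimes v:=2^{-1}\inf\{\theta u+\theta^{-1}v:\theta\in(0,\infty)\}$ for $u,v\in F^+$. A map $T\colon V\times V\to F$ is a vector semi-inner product if it is bilinear ($T(x+y,z)=T(x,z)+T(y,z)$, $T(x,y+z)=T(x,y)+T(x,z)$, $\lambda T(x,y)=T(\lambda x,y)=T(x,\lambda y)$ for all $x,y,z\in V$, $\lambda\in\mathbb{R}$), symmetric ($T(x,y)=T(y,x)$), and satisfies $T(x,x)\ge 0$ for all $x\in V$. *)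

theory Defs
  imports Main "HOL-Analysis.Analysis"
begin

definition archimedean_vl :: "('f::{ordered_real_vector, lattice}) itself \<Rightarrow> bool" where
  "archimedean_vl _ \<longleftrightarrow>
     (\<forall>u v :: 'f. 0 \<le> u \<and> 0 \<le> v \<and> (\<forall>n::nat. real n *\<^sub>R u \<le> v) \<longrightarrow> u = 0)"

definition is_infimum :: "'f::order set \<Rightarrow> 'f \<Rightarrow> bool" where
  "is_infimum S a \<longleftrightarrow> (\<forall>x\<in>S. a \<le> x) \<and> (\<forall>b. (\<forall>x\<in>S. b \<le> x) \<longrightarrow> b \<le> a)"

definition gm_set :: "'f::real_vector \<Rightarrow> 'f \<Rightarrow> 'f set" where
  "gm_set u v = {\<theta> *\<^sub>R u + inverse \<theta> *\<^sub>R v | \<theta>::real. 0 < \<theta>}"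

definition geometric_mean_closed :: "('f::{ordered_real_vector, lattice}) itself \<Rightarrow> bool" where
  "geometric_mean_closed _ \<longleftrightarrow>
     (\<forall>u v :: 'f. 0 \<le> u \<and> 0 \<le> v \<longrightarrow> (\<exists>a. is_infimum (gm_set u v) a))"

definition gmean :: "'f::{ordered_real_vector, lattice} \<Rightarrow> 'f \<Rightarrow> 'f" (infixl "\<boxtimes>" 70) where
  "u \<boxtimes> v = inverse 2 *\<^sub>R (THE a. is_infimum (gm_set u v) a)"

definition vector_semi_inner_product ::
  "('v::real_vector \<Rightarrow> 'v \<Rightarrow> 'f::{ordered_real_vector, lattice}) \<Rightarrow> bool" where
  "vector_semi_inner_product T \<longleftrightarrow>
     (\<forall>x y z. T (x + y) z = T x z + T y z) \<and>
     (\<forall>x y z. T x (y + z) = T x y + T x z) \<and>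
     (\<forall>x y (c::real). c *\<^sub>R T x y = T (c *\<^sub>R x) y \<and> c *\<^sub>R T x y = T x (c *\<^sub>R y)) \<and>
     (\<forall>x y. T x y = T y x) \<and>
     (\<forall>x. 0 \<le> T x x)"

end

theory Submission
  imports Defs
begin

lemma inf_the:
  fixes S :: "'f::order set"
  assumes "is_infimum S a" shows "(THE a. is_infimum S a) = a"
proof (rule the_equality)
  show "is_infimum S a" by fact
  fix b assume "is_infimum S b"
  with assms show "b = a" unfolding is_infimum_def by (meson order.antisym)
qed

lemma gm_ex:
  fixes a u :: "'f::{ordered_real_vector, lattice}"
  assumes "geometric_mean_closed TYPE('f)" "0 \<le> a" "0 \<le> u"
  obtains g where "is_infimum (gm_set a u) g" "a \<boxtimes> u = inverse 2 *\<^sub>R g"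
  using assms unfolding geometric_mean_closed_def gmean_def
  by (metis inf_the)

lemma gm_eq:
  fixes a u :: "'f::{ordered_real_vector, lattice}"
  assumes "is_infimum (gm_set a u) g"
  shows "a \<boxtimes> u = inverse 2 *\<^sub>R g"
  using assms unfolding gmean_def by (simp add: inf_the)

lemma vsip:
  assumes "vector_semi_inner_product T"
  shows "T (x + y) z = T x z + T y z" "T x (y + z) = T x y + T x z"
    "T (c *\<^sub>R x) y = c *\<^sub>R T x y" "T x (c *\<^sub>R y) = c *\<^sub>R T x y"
    "T y x = T x y" "0 \<le> T x x"
  using assms unfolding vector_semi_inner_product_def by metis+

lemma gm_zero:
  fixes u :: "'f::{ordered_real_vector, lattice}"
  assumes arch: "archimedean_vl TYPE('f)" and u: "0 \<le> u"
  shows "is_infimum (gm_set 0 u) 0"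
  unfolding is_infimum_def
proof (intro conjI allI impI ballI)
  fix x assume "x \<in> gm_set 0 u"
  then obtain t :: real where "0 < t" "x = t *\<^sub>R 0 + inverse t *\<^sub>R u"
    unfolding gm_set_def by blast
  then show "0 \<le> x" using u \<open>0 < t\<close> by (simp add: scaleR_nonneg_nonneg del: scaleR_zero_right)
next
  fix b :: 'f assume lb: "\<forall>x\<in>gm_set 0 u. b \<le> x"
  have "real n *\<^sub>R sup b 0 \<le> u" for n :: nat
  proof (cases "n = 0")
    case True then show ?thesis using u by simp
  next
    case False
    hence np: "0 < real n" by simp
    have "real n *\<^sub>R 0 + inverse (real n) *\<^sub>R u \<in> gm_set 0 u"
      unfolding gm_set_def using np by blast
    hence "b \<le> inverse (real n) *\<^sub>R u" using lb by simp
    moreover have "0 \<le> inverse (real n) *\<^sub>R u" using u np by (simp add: scaleR_nonneg_nonneg)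
    ultimately have "sup b 0 \<le> inverse (real n) *\<^sub>R u" by simp
    hence "real n *\<^sub>R sup b 0 \<le> real n *\<^sub>R (inverse (real n) *\<^sub>R u)"
      by (rule scaleR_left_mono) simp
    then show ?thesis using np by simp
  qed
  hence "sup b 0 = 0" using arch u unfolding archimedean_vl_def by (meson sup_ge2)
  then show "b \<le> 0" by (metis sup_ge1)
qed

lemma gm_scale:
  fixes a u g :: "'f::{ordered_real_vector, lattice}"
  assumes g: "is_infimum (gm_set a u) g" and c: "0 < c"
  shows "is_infimum (gm_set ((c*c) *\<^sub>R a) u) (c *\<^sub>R g)"
  unfolding is_infimum_def
proof (intro conjI allI impI ballI)
  fix x assume "x \<in> gm_set ((c*c) *\<^sub>R a) u"
  then obtain t :: real where t: "0 < t" "x = t *\<^sub>R (c*c) *\<^sub>R a + inverse t *\<^sub>R u"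
    unfolding gm_set_def by blast
  have "(t*c) *\<^sub>R a + inverse (t*c) *\<^sub>R u \<in> gm_set a u"
    unfolding gm_set_def using t c by (intro CollectI exI[of _ "t*c"]) simp
  hence "g \<le> (t*c) *\<^sub>R a + inverse (t*c) *\<^sub>R u" using g unfolding is_infimum_def by blast
  hence "c *\<^sub>R g \<le> c *\<^sub>R ((t*c) *\<^sub>R a + inverse (t*c) *\<^sub>R u)"
    using c by (simp add: scaleR_left_mono)
  also have "\<dots> = x" using t c by (simp add: scaleR_add_right field_simps)
  finally show "c *\<^sub>R g \<le> x" .
next
  fix b assume lb: "\<forall>x\<in>gm_set ((c*c) *\<^sub>R a) u. b \<le> x"
  have "inverse c *\<^sub>R b \<le> x" if xm: "x \<in> gm_set a u" for x
  proof -
    obtain s :: real where s: "0 < s" "x = s *\<^sub>R a + inverse s *\<^sub>R u"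
      using xm unfolding gm_set_def by blast
    have "(s / c) *\<^sub>R (c*c) *\<^sub>R a + inverse (s/c) *\<^sub>R u \<in> gm_set ((c*c) *\<^sub>R a) u"
      unfolding gm_set_def using s c by (intro CollectI exI[of _ "s/c"]) simp
    hence "b \<le> (s / c) *\<^sub>R (c*c) *\<^sub>R a + inverse (s/c) *\<^sub>R u" using lb by blast
    also have "\<dots> = c *\<^sub>R x" using s c by (simp add: scaleR_add_right field_simps)
    finally have bx: "b \<le> c *\<^sub>R x" .
    have "inverse c *\<^sub>R b \<le> inverse c *\<^sub>R (c *\<^sub>R x)"
      by (rule scaleR_left_mono[OF bx]) (use c in simp)
    then show ?thesis using c by simp
  qed
  hence "inverse c *\<^sub>R b \<le> g" using g unfolding is_infimum_def by blast
  hence "c *\<^sub>R (inverse c *\<^sub>R b) \<le> c *\<^sub>R g" by (rule scaleR_left_mono) (use c in simp)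
  then show "b \<le> c *\<^sub>R g" using c by simp
qed

theorem theorem3p3:
  fixes T :: "'v::real_vector \<Rightarrow> 'v \<Rightarrow> 'f::{ordered_real_vector, lattice}"
    and u :: 'f
  assumes "archimedean_vl TYPE('f)"
    and "geometric_mean_closed TYPE('f)"
    and "0 \<le> u"
    and "vector_semi_inner_product T"
  shows "(\<forall>x. 0 \<le> T x x \<boxtimes> u)
     \<and> (\<forall>x (\<alpha>::real). T (\<alpha> *\<^sub>R x) (\<alpha> *\<^sub>R x) \<boxtimes> u = \<bar>\<alpha>\<bar> *\<^sub>R (T x x \<boxtimes> u))
     \<and> (\<forall>x y. T (x + y) (x + y) \<boxtimes> u \<le> T x x \<boxtimes> u + T y y \<boxtimes> u)"
proof (intro conjI allI)
  note V = vsip[OF assms(4)]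
  fix x
  obtain g where g: "is_infimum (gm_set (T x x) u) g" "T x x \<boxtimes> u = inverse 2 *\<^sub>R g"
    using gm_ex[OF assms(2) V(6) assms(3)] by blast
  have "\<forall>y\<in>gm_set (T x x) u. 0 \<le> y"
    unfolding gm_set_def using V(6) assms(3)
    by (auto intro!: add_nonneg_nonneg scaleR_nonneg_nonneg)
  hence "0 \<le> g" using g(1) unfolding is_infimum_def by blast
  then show "0 \<le> T x x \<boxtimes> u" unfolding g(2) by (rule scaleR_nonneg_nonneg[rotated]) simp
next
  note V = vsip[OF assms(4)]
  fix x and \<alpha> :: real
  obtain g where g: "is_infimum (gm_set (T x x) u) g" "T x x \<boxtimes> u = inverse 2 *\<^sub>R g"
    using gm_ex[OF assms(2) V(6) assms(3)] by blast
  show "T (\<alpha> *\<^sub>R x) (\<alpha> *\<^sub>R x) \<boxtimes> u = \<bar>\<alpha>\<bar> *\<^sub>R (T x x \<boxtimes> u)"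
  proof (cases "\<alpha> = 0")
    case True
    have "T (\<alpha> *\<^sub>R x) (\<alpha> *\<^sub>R x) = 0" using V(3)[of 0 x "0 *\<^sub>R x"] True by simp
    then show ?thesis using gm_eq[OF gm_zero[OF assms(1) assms(3)]] True by simp
  next
    case False
    have e: "T (\<alpha> *\<^sub>R x) (\<alpha> *\<^sub>R x) = (\<bar>\<alpha>\<bar> * \<bar>\<alpha>\<bar>) *\<^sub>R T x x"
      using V(3,4) by (simp add: abs_mult_self_eq)
    have "is_infimum (gm_set ((\<bar>\<alpha>\<bar> * \<bar>\<alpha>\<bar>) *\<^sub>R T x x) u) (\<bar>\<alpha>\<bar> *\<^sub>R g)"
      using gm_scale[OF g(1), of "\<bar>\<alpha>\<bar>"] False by simp
    then show ?thesis using gm_eq e g(2) by (metis scaleR_left_commute)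
  qed
next
  note V = vsip[OF assms(4)]
  fix x y
  define A where "A = T x x"
  define B where "B = T y y"
  define C where "C = T x y"
  have S: "T (x + y) (x + y) = A + B + 2 *\<^sub>R C"
    unfolding A_def B_def C_def using V(1,2) V(5)[of x y] by (simp add: scaleR_2 algebra_simps)
  obtain gA where gA: "is_infimum (gm_set A u) gA" "A \<boxtimes> u = inverse 2 *\<^sub>R gA"
    using gm_ex[OF assms(2) V(6) assms(3)] A_def by blast
  obtain gB where gB: "is_infimum (gm_set B u) gB" "B \<boxtimes> u = inverse 2 *\<^sub>R gB"
    using gm_ex[OF assms(2) V(6) assms(3)] B_def by blast
  obtain gS where gS: "is_infimum (gm_set (A + B + 2 *\<^sub>R C) u) gS"
      "(A + B + 2 *\<^sub>R C) \<boxtimes> u = inverse 2 *\<^sub>R gS"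
    using gm_ex[OF assms(2) V(6) assms(3)] S by metis
  have key: "gS \<le> (s *\<^sub>R A + inverse s *\<^sub>R u) + (t *\<^sub>R B + inverse t *\<^sub>R u)"
    if st: "0 < s" "0 < t" for s t :: real
  proof -
    define p where "p = s * t / (s + t)"
    have p: "0 < p" using st unfolding p_def by simp
    have "p *\<^sub>R (A + B + 2 *\<^sub>R C) + inverse p *\<^sub>R u \<in> gm_set (A + B + 2 *\<^sub>R C) u"
      unfolding gm_set_def using p by blast
    hence 1: "gS \<le> p *\<^sub>R (A + B + 2 *\<^sub>R C) + inverse p *\<^sub>R u"
      using gS(1) unfolding is_infimum_def by blast
    have nn: "0 \<le> T (s *\<^sub>R x + (-t) *\<^sub>R y) (s *\<^sub>R x + (-t) *\<^sub>R y)" by (rule V(6))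
    have ex: "T (s *\<^sub>R x + (-t) *\<^sub>R y) (s *\<^sub>R x + (-t) *\<^sub>R y)
         = (s * s) *\<^sub>R A + (t * t) *\<^sub>R B - (2 * s * t) *\<^sub>R C"
      unfolding A_def B_def C_def V(1,2) V(3,4) V(5)[of y x]
      by (simp add: algebra_simps flip: scaleR_add_left)
    have "0 \<le> inverse (s+t) *\<^sub>R ((s * s) *\<^sub>R A + (t * t) *\<^sub>R B - (2 * s * t) *\<^sub>R C)"
      using nn ex st by (intro scaleR_nonneg_nonneg) simp_all
    also have "inverse (s+t) *\<^sub>R ((s * s) *\<^sub>R A + (t * t) *\<^sub>R B - (2 * s * t) *\<^sub>R C)
       = (s *\<^sub>R A + inverse s *\<^sub>R u) + (t *\<^sub>R B + inverse t *\<^sub>R u)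
         - (p *\<^sub>R (A + B + 2 *\<^sub>R C) + inverse p *\<^sub>R u)"
    proof -
      have i: "inverse p = inverse s + inverse t" using st unfolding p_def by (simp add: field_simps)
      have a: "inverse (s+t) * (s * s) = s - p" using st unfolding p_def by (simp add: field_simps)
      have b: "inverse (s+t) * (t * t) = t - p" using st unfolding p_def by (simp add: field_simps)
      have c: "inverse (s+t) * (2 * s * t) = 2 * p" using st unfolding p_def by (simp add: field_simps)
      have "inverse (s+t) *\<^sub>R ((s * s) *\<^sub>R A + (t * t) *\<^sub>R B - (2 * s * t) *\<^sub>R C)
          = (s - p) *\<^sub>R A + (t - p) *\<^sub>R B - (2 * p) *\<^sub>R C"
        by (simp only: scaleR_diff_right scaleR_add_right scaleR_scaleR a b c)
      also have "\<dots> = (s *\<^sub>R A + inverse s *\<^sub>R u) + (t *\<^sub>R B + inverse t *\<^sub>R u)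
         - (p *\<^sub>R (A + B + 2 *\<^sub>R C) + inverse p *\<^sub>R u)"
        unfolding i by (simp add: algebra_simps)
      finally show ?thesis .
    qed
    finally show ?thesis using 1 by simp
  qed
  have "gS \<le> gA + gB"
  proof -
    have "gS - gA \<le> z" if zm: "z \<in> gm_set B u" for z
    proof -
      obtain t :: real where t: "0 < t" "z = t *\<^sub>R B + inverse t *\<^sub>R u"
        using zm unfolding gm_set_def by blast
      have "gS - z \<le> w" if wm: "w \<in> gm_set A u" for w
      proof -
        obtain s :: real where s: "0 < s" "w = s *\<^sub>R A + inverse s *\<^sub>R u"
          using wm unfolding gm_set_def by blast
        show ?thesis using key[OF s(1) t(1)] s t by (simp add: algebra_simps)
      qed
      hence "gS - z \<le> gA" using gA(1) unfolding is_infimum_def by blast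
      then show ?thesis by (simp add: algebra_simps)
    qed
    hence "gS - gA \<le> gB" using gB(1) unfolding is_infimum_def by blast
    then show ?thesis by (simp add: algebra_simps)
  qed
  hence "inverse 2 *\<^sub>R gS \<le> inverse 2 *\<^sub>R (gA + gB)" by (simp add: scaleR_left_mono)
  then show "T (x + y) (x + y) \<boxtimes> u \<le> T x x \<boxtimes> u + T y y \<boxtimes> u"
    using S gS(2) gA(2) gB(2) A_def B_def by (simp add: scaleR_add_right)
qed

end
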